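(* Consider the system \[ \begin{aligned} \dot T(t)&= s-dT(t)+aT(t)\Big(1-\frac{T(t)+I(t)}{T_{\max}}\Big)-\frac{bT(t)V(t)}{1+\alpha V(t)},\\ \dot I(t)&= \frac{bT(t-\tau)V(t-\tau)}{1+\alpha V(t-\tau)}+aI(t)\Big(1-\frac{T(t)+I(t)}{T_{\max}}\Big)-\mu I(t),\\ \dot V(t)&= pI(t)-cV(t), \end{aligned} \] with positive constants $s,d,a,T_{\max},b,\alpha,\mu,p,c$ and $\tau\ge0$, and let $E_2=(T_2,I_2,V_2)$ be an infected equilibrium ($T_2,I_2,V_2>0$). Let $a_2,a_1,a_0,b_1,b_0,A,B,C,\Delta,z_1,\tau_0$ be as defined below, and suppose $a_0+b_0>0$ and $a_2(a_1+b_1)-(a_0+b_0)>0$. (a) If $C\ge0$ and $\Delta=A^2-3B<0$, then all roots of $\lambda^3+a_2\lambda^2+a_1\lambda+a_0+(b_1\lambda+b_0)e^{-\lambda\tau}=0$ have negative real parts for all $\tau\ge0$, so $E_2$ is locally asymptotically stable for all $\tau\ge0$. (b) If $C<0$, or if $C\ge0$, $z_1>0$ and $z_1^3+Az_1^2+Bz_1+C\le0$, then all roots of that equation have negative real parts when $\tau\in[0,\tau_0)$, so $E_2$ is locally asymptotically stable for $\tau\in[0,\tau_0)$.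
   Context: Set $\beta=\frac{bV_2}{1+\alpha V_2}$, $k=\frac{aT_2}{T_{\max}}$, $q=\frac{aI_2}{T_{\max}}$, $m=\frac{bT_2}{(1+\alpha V_2)^2}$, $\kappa=\frac{pI_2}{V_2}$, $\rho=d-a+\frac{a(T_2+I_2)}{T_{\max}}$, $A_{11}=\rho+k+\beta$, $A_{22}=\frac{bT_2V_2}{(1+\alpha V_2)I_2}+q$, $a_2=A_{11}+A_{22}+\kappa$, $a_1=A_{11}A_{22}+\kappa A_{11}+\kappa A_{22}-kq$, $a_0=\kappa A_{11}A_{22}-\kappa kq-pqm$, $b_1=\beta k-pm$, $b_0=\beta k\kappa+\beta pm-pmA_{11}$; with these, the characteristic equation of the linearization at $E_2$ is $\lambda^3+a_2\lambda^2+a_1\lambda+a_0+(b_1\lambda+b_0)e^{-\lambda\tau}=0$. Let $A=a_2^2-2a_1$, $B=a_1^2-2a_2a_0-b_1^2$, $C=a_0^2-b_0^2$, $\Delta=A^2-3B$, and, when $\Delta\ge0$, $z_1=\frac{-A+\sqrt{\Delta}}{3}$ (the condition $z_1>0$ includes that $\Delta\ge0$). When $z^3+Az^2+Bz+C=0$ has a positive root, let $z_0$ be its smallest positive root, $\omega_0=\sqrt{z_0}$, and \[ \tau_0=\frac{1}{\omega_0}\arccos\Big[\frac{b_0(a_2\omega_0^2-a_0)+b_1\omega_0(\omega_0^3-a_1\omega_0)}{b_0^2+b_1^2\omega_0^2}\Big]. \] *)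

theory Defs
  imports "HOL-Analysis.Analysis"
begin

text \<open>Smallest positive root z0 of z^3 + A z^2 + B z + C = 0 (meaningful when one exists).\<close>
definition smallest_pos_root :: "real \<Rightarrow> real \<Rightarrow> real \<Rightarrow> real" where
  "smallest_pos_root A B C = Min {z::real. z > 0 \<and> z^3 + A*z^2 + B*z + C = 0}"

definition tau0 :: "real \<Rightarrow> real \<Rightarrow> real \<Rightarrow> real \<Rightarrow> real \<Rightarrow> real \<Rightarrow> real \<Rightarrow> real \<Rightarrow> real" where
  "tau0 a2 a1 a0 b1 b0 A B C =
     (let w = sqrt (smallest_pos_root A B C) in
      (1 / w) * arccos ((b0 * (a2 * w^2 - a0) + b1 * w * (w^3 - a1 * w)) / (b0^2 + b1^2 * w^2)))"

definition char_eq :: "real \<Rightarrow> real \<Rightarrow> real \<Rightarrow> real \<Rightarrow> real \<Rightarrow> real \<Rightarrow> complex \<Rightarrow> bool" where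
  "char_eq a2 a1 a0 b1 b0 \<tau> lam \<longleftrightarrow>
     lam^3 + of_real a2 * lam^2 + of_real a1 * lam + of_real a0
       + (of_real b1 * lam + of_real b0) * exp (- lam * of_real \<tau>) = 0"

end

theory Submission
  imports Defs "HOL-Complex_Analysis.Complex_Analysis"
begin

lemma root_bound_c:
  assumes ce: "z^3 + of_real a2 * z^2 + of_real a1 * z + of_real a0
       + (of_real b1 * z + of_real b0) * exp (- z * of_real \<tau>) = c" and t: "\<tau> \<ge> 0" and rz: "Re z \<ge> 0"
  shows "norm z \<le> 1 + \<bar>a2\<bar> + \<bar>a1\<bar> + \<bar>a0\<bar> + \<bar>b1\<bar> + \<bar>b0\<bar> + norm c"
proof (rule ccontr)
  define r where "r = norm z"
  define e where "e = exp (- z * of_real \<tau>)"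
  assume "\<not> ?thesis"
  hence rg: "r > 1 + \<bar>a2\<bar> + \<bar>a1\<bar> + \<bar>a0\<bar> + \<bar>b1\<bar> + \<bar>b0\<bar> + norm c" by (simp add: r_def)
  hence r1: "r > 1" by (smt (verit) abs_ge_zero norm_ge_zero)
  have ne: "norm e \<le> 1" unfolding e_def using t rz by (simp add: norm_exp_eq_Re mult_nonneg_nonneg)
  have eq: "z^3 = c - (of_real a2 * z^2 + of_real a1 * z + of_real a0 + (of_real b1 * z + of_real b0) * e)"
    using ce unfolding e_def by (simp add: algebra_simps)
  have hb: "norm (of_real a2 * z^2 + of_real a1 * z + of_real a0 + (of_real b1 * z + of_real b0) * e)
     \<le> \<bar>a2\<bar> * r^2 + \<bar>a1\<bar> * r + \<bar>a0\<bar> + (\<bar>b1\<bar> * r + \<bar>b0\<bar>) * 1"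
  proof -
    have "norm ((of_real b1 * z + of_real b0) * e) \<le> (\<bar>b1\<bar> * r + \<bar>b0\<bar>) * 1"
      unfolding norm_mult
      apply (rule mult_mono)
      using ne by (auto intro!: order.trans[OF norm_triangle_ineq] simp: norm_mult r_def)
    then show ?thesis
      by (auto intro!: order.trans[OF norm_triangle_ineq] add_mono simp: norm_mult norm_power r_def)
  qed
  have "r^3 = norm (c - (of_real a2 * z^2 + of_real a1 * z + of_real a0 + (of_real b1 * z + of_real b0) * e))"
    using eq by (metis norm_power r_def)
  also have "\<dots> \<le> norm c + norm (of_real a2 * z^2 + of_real a1 * z + of_real a0 + (of_real b1 * z + of_real b0) * e)"
    by (rule norm_triangle_ineq4)
  also have "\<dots> \<le> norm c + (\<bar>a2\<bar> * r^2 + \<bar>a1\<bar> * r + \<bar>a0\<bar> + (\<bar>b1\<bar> * r + \<bar>b0\<bar>) * 1)"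
    using hb by (rule add_left_mono)
  also have "\<dots> \<le> (\<bar>a2\<bar> + \<bar>a1\<bar> + \<bar>a0\<bar> + \<bar>b1\<bar> + \<bar>b0\<bar> + norm c) * r^2"
  proof -
    have "r \<le> r^2" using r1 by (simp add: power2_eq_square)
    moreover have "1 \<le> r^2" using r1 by (simp add: power2_eq_square) (metis less_1_mult less_eq_real_def)
    ultimately have "\<bar>a1\<bar> * r \<le> \<bar>a1\<bar> * r^2" "\<bar>b1\<bar> * r \<le> \<bar>b1\<bar> * r^2"
      "\<bar>a0\<bar> \<le> \<bar>a0\<bar> * r^2" "\<bar>b0\<bar> \<le> \<bar>b0\<bar> * r^2" "norm c \<le> norm c * r^2"
      by (auto intro: mult_left_mono[of _ _ "\<bar>_\<bar>", simplified] mult_left_mono[of 1 "r^2" "\<bar>_\<bar>", simplified]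
         mult_left_mono[of 1 "r^2" "norm c", simplified])
    then show ?thesis by (simp add: algebra_simps)
  qed
  also have "\<dots> < r * r^2"
    using rg r1 by (intro mult_strict_right_mono) auto
  finally show False by (simp add: power3_eq_cube power2_eq_square)
qed

lemma root_bound:
  assumes ce: "char_eq a2 a1 a0 b1 b0 \<tau> z" and t: "\<tau> \<ge> 0" and rz: "Re z \<ge> 0"
  shows "norm z \<le> 1 + \<bar>a2\<bar> + \<bar>a1\<bar> + \<bar>a0\<bar> + \<bar>b1\<bar> + \<bar>b0\<bar>"
  using root_bound_c[of z a2 a1 a0 b1 b0 \<tau> 0] assms unfolding char_eq_def by simp

lemma RH_cubic:
  fixes x y a2 c1 c0 :: real
  assumes "a2 > 0" "c0 > 0" "a2 * c1 > c0" "x \<ge> 0"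
    and re: "x^3 - 3*x*y^2 + a2*(x^2 - y^2) + c1*x + c0 = 0"
    and im: "3*x^2*y - y^3 + 2*a2*x*y + c1*y = 0"
  shows False
proof -
  have c1: "c1 > 0" using assms by (smt (verit) mult_nonneg_nonpos)
  show False
  proof (cases "y = 0")
    case True
    then have "x^3 + a2*x^2 + c1*x + c0 = 0" using re by simp
    moreover have "x^3 + a2*x^2 + c1*x + c0 > 0" using assms c1
      by (smt (verit) mult_nonneg_nonneg zero_le_power)
    ultimately show False by simp
  next
    case False
    have "y * (3*x^2 - y^2 + 2*a2*x + c1) = 0" using im by (simp add: algebra_simps power2_eq_square power3_eq_cube)
    hence y2: "y^2 = 3*x^2 + 2*a2*x + c1" using False by simp
    have "x^3 - 3*x*y^2 + a2*(x^2 - y^2) + c1*x + c0 =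
          -8*x^3 - 8*a2*x^2 - 2*c1*x - 2*a2^2*x - (a2*c1 - c0)"
      unfolding y2 by (simp add: algebra_simps power2_eq_square power3_eq_cube)
    moreover have "-8*x^3 - 8*a2*x^2 - 2*c1*x - 2*a2^2*x - (a2*c1 - c0) < 0"
      using assms c1 by (smt (verit) mult_nonneg_nonneg zero_le_power)
    ultimately show False using re by simp
  qed
qed

lemma aux34: "(x::real) \<noteq> 0 \<Longrightarrow> 3/2*x*(e/(2*x)) = 3/4*e" by (simp add: field_simps)

lemma stab_interval:
  fixes I :: "real set"
  assumes I: "is_interval I" "0 \<in> I" "\<forall>\<tau>\<in>I. \<tau> \<ge> 0"
    and noimag: "\<forall>\<tau>\<in>I. \<forall>z. char_eq a2 a1 a0 b1 b0 \<tau> z \<longrightarrow> Re z \<noteq> 0"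
    and base: "\<forall>z. char_eq a2 a1 a0 b1 b0 0 z \<longrightarrow> Re z < 0"
  shows "\<forall>\<tau>\<in>I. \<forall>z. char_eq a2 a1 a0 b1 b0 \<tau> z \<longrightarrow> Re z < 0"
proof -
  define f where "f \<tau> z = z^3 + of_real a2 * z^2 + of_real a1 * z + of_real a0
       + (of_real b1 * z + of_real b0) * exp (- z * of_real \<tau>)" for \<tau> :: real and z :: complex
  have ce: "char_eq a2 a1 a0 b1 b0 \<tau> z \<longleftrightarrow> f \<tau> z = 0" for \<tau> z
    unfolding char_eq_def f_def by simp
  define R where "R = 1 + \<bar>a2\<bar> + \<bar>a1\<bar> + \<bar>a0\<bar> + \<bar>b1\<bar> + \<bar>b0\<bar>"
  define K where "K = cball 0 R \<inter> {z::complex. 0 \<le> Re z}"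
  define U where "U = {\<tau>\<in>I. \<exists>z. 0 \<le> Re z \<and> f \<tau> z = 0}"
  have conI: "connected I" using I(1) by (simp add: is_interval_connected)
  have cK: "compact K" unfolding K_def
    by (intro compact_Int_closed compact_cball closed_halfspace_Re_ge)
  have clo: "closedin (top_of_set I) U"
  proof -
    define W where "W = {p \<in> K \<times> I. f (snd p) (fst p) = 0}"
    have "continuous_on (K \<times> I) (\<lambda>p. f (snd p) (fst p))"
      unfolding f_def by (intro continuous_intros)
    hence "closedin (top_of_set (K \<times> I)) W"
      unfolding W_def by (rule continuous_closedin_preimage_constant)
    hence "closedin (top_of_set I) {y. \<exists>x. x \<in> K \<and> (x, y) \<in> W}"
      using cK by (rule closedin_compact_projection[rotated])
    moreover have "{y. \<exists>x. x \<in> K \<and> (x, y) \<in> W} = U"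
    proof (intro set_eqI iffI)
      fix t assume "t \<in> {y. \<exists>x. x \<in> K \<and> (x, y) \<in> W}"
      thus "t \<in> U" unfolding W_def K_def U_def by auto
    next
      fix t assume "t \<in> U"
      then obtain z where z: "t \<in> I" "0 \<le> Re z" "f t z = 0" unfolding U_def by auto
      have "norm z \<le> R" unfolding R_def using root_bound[of a2 a1 a0 b1 b0 t z] z I(3) ce by auto
      thus "t \<in> {y. \<exists>x. x \<in> K \<and> (x, y) \<in> W}" unfolding W_def K_def using z by auto
    qed
    ultimately show ?thesis by simp
  qed
  have opn: "openin (top_of_set I) U"
    unfolding openin_euclidean_subtopology_iff
  proof (intro conjI ballI)
    show "U \<subseteq> I" unfolding U_def by auto
  next
    fix ts assume ts: "ts \<in> U"
    then obtain zs where zs: "ts \<in> I" "0 \<le> Re zs" "f ts zs = 0" unfolding U_def by auto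
    have zs0: "0 < Re zs" using zs noimag ce by force
    show "\<exists>e>0. \<forall>x'\<in>I. dist x' ts < e \<longrightarrow> x' \<in> U"
    proof (rule ccontr)
      assume "\<not> ?thesis"
      hence "\<forall>n::nat. \<exists>t. t \<in> I \<and> dist t ts < inverse (real (Suc n)) \<and> t \<notin> U"
        by (metis of_nat_0_less_iff positive_imp_inverse_positive zero_less_Suc)
      then obtain sq where sq: "\<And>n. sq n \<in> I" "\<And>n. dist (sq n) ts < inverse (real (Suc n))"
          "\<And>n. sq n \<notin> U"
        by metis
      define S where "S = {z::complex. 0 < Re z}"
      have "f ts zs \<noteq> 0"
      proof (rule Hurwitz_no_zeros[of S "\<lambda>n. f (sq n)" "f ts"])
        show "open S" unfolding S_def by (rule open_halfspace_Re_gt)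
        show "connected S" unfolding S_def by (rule convex_connected, rule convex_halfspace_Re_gt)
        show "f (sq n) holomorphic_on S" for n unfolding f_def by (intro holomorphic_intros)
        show "f ts holomorphic_on S" unfolding f_def by (intro holomorphic_intros)
        show "zs \<in> S" unfolding S_def using zs0 by simp
        show "f (sq n) z \<noteq> 0" if "z \<in> S" for n z
          using sq(1,3)[of n] that unfolding S_def U_def by auto
        show "\<not> f ts constant_on S"
        proof
          assume "f ts constant_on S"
          then obtain c where c: "\<And>z. z \<in> S \<Longrightarrow> f ts z = c" unfolding constant_on_def by metis
          define t where "t = R + norm c + 1"
          have tpos: "t > 0" unfolding t_def R_def by (smt (verit) abs_ge_zero norm_ge_zero)
          have "f ts (of_real t) = c" using c tpos unfolding S_def by simp
          hence "norm (of_real t :: complex) \<le> R + norm c"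
            unfolding R_def f_def using root_bound_c[of "of_real t" a2 a1 a0 b1 b0 ts c] zs I(3) tpos
            by simp
          moreover have "norm (of_real t :: complex) = t" using tpos by simp
          ultimately show False unfolding t_def by linarith
        qed
        show "uniform_limit K' (\<lambda>n. f (sq n)) (f ts) sequentially" if K': "compact K'" "K' \<subseteq> S" for K'
        proof -
          obtain M where M: "M > 0" "\<And>z. z \<in> K' \<Longrightarrow> norm z \<le> M"
            using compact_imp_bounded[OF K'(1)] bounded_pos by metis
          define Bq where "Bq = \<bar>b1\<bar> * M + \<bar>b0\<bar>"
          show ?thesis
          proof (rule uniform_limitI)
            fix e :: real assume e: "e > 0"
            define \<delta> where "\<delta> = min (1 / (2*M)) (e / (2 * (Bq + 1) * M))"
            have Bq0: "Bq \<ge> 0" unfolding Bq_def using M by simp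
            have \<delta>0: "\<delta> > 0" unfolding \<delta>_def using M e Bq0 by simp
            obtain N where N: "inverse (real (Suc N)) < \<delta>"
              using reals_Archimedean[OF \<delta>0] by auto
            show "\<forall>\<^sub>F n in sequentially. \<forall>z\<in>K'. dist (f (sq n) z) (f ts z) < e"
            proof (rule eventually_sequentiallyI[of N], intro ballI)
              fix n z assume n: "N \<le> n" and z: "z \<in> K'"
              have dn: "\<bar>sq n - ts\<bar> < \<delta>"
              proof -
                have "inverse (real (Suc n)) \<le> inverse (real (Suc N))"
                  using n by (simp add: le_imp_inverse_le)
                thus ?thesis using sq(2)[of n] N unfolding dist_real_def by linarith
              qed
              have zM: "norm z \<le> M" using M z by simp
              have rz: "0 < Re z" using z K'(2) unfolding S_def by auto
              define w where "w = - z * of_real (sq n - ts)"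
              have nw: "norm w \<le> M * \<bar>sq n - ts\<bar>" unfolding w_def norm_mult norm_minus_cancel norm_of_real
                using zM by (simp add: mult_right_mono)
              have nw2: "norm w \<le> 1/2"
              proof -
                have "M * \<bar>sq n - ts\<bar> \<le> M * (1/(2*M))"
                  using dn M unfolding \<delta>_def by (intro mult_left_mono) auto
                thus ?thesis using nw M by simp
              qed
              have ex: "exp (- z * of_real (sq n)) = exp (- z * of_real ts) * exp w"
                unfolding w_def by (simp add: mult_exp_exp algebra_simps)
              have nets: "norm (exp (- z * of_real ts)) \<le> 1"
                using rz zs I(3) by (simp add: norm_exp_eq_Re mult_nonneg_nonneg)
              have "f (sq n) z - f ts z = (of_real b1 * z + of_real b0) * (exp (- z * of_real ts) * (exp w - 1))"
                unfolding f_def ex by (simp add: algebra_simps)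
              hence "dist (f (sq n) z) (f ts z) = norm (of_real b1 * z + of_real b0) * (norm (exp (- z * of_real ts)) * norm (exp w - 1))"
                by (simp add: dist_norm norm_mult)
              also have "\<dots> \<le> Bq * (1 * (3/2 * (M * \<bar>sq n - ts\<bar>)))"
              proof (intro mult_mono)
                show "norm (of_real b1 * z + of_real b0) \<le> Bq" unfolding Bq_def
                  using zM by (auto intro!: order.trans[OF norm_triangle_ineq] mult_left_mono simp: norm_mult)
                show "norm (exp w - 1) \<le> 3/2 * (M * \<bar>sq n - ts\<bar>)"
                  using norm_exp_bounds(2)[OF nw2] nw by simp
              qed (use nets Bq0 M in auto)
              also have "\<dots> < e"
              proof -
                have "Bq * (3/2 * (M * \<bar>sq n - ts\<bar>)) \<le> (Bq + 1) * (3/2 * (M * \<bar>sq n - ts\<bar>))"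
                  using M by (intro mult_right_mono) auto
                also have "\<dots> < (Bq + 1) * (3/2 * (M * (e / (2 * (Bq + 1) * M))))"
                  using dn M Bq0 unfolding \<delta>_def by (intro mult_strict_left_mono) auto
                also have "\<dots> = 3/4 * e"
                proof -
                  have h: "(Bq + 1) * M \<noteq> 0" using M Bq0 by auto
                  have "(Bq + 1) * (3/2 * (M * (e / (2 * (Bq + 1) * M)))) = 3/2 * ((Bq+1)*M) * (e / (2*((Bq+1)*M)))"
                    by (simp add: ac_simps)
                  also have "\<dots> = 3/4*e" using aux34[OF h] .
                  finally show ?thesis .
                qed
                finally show ?thesis using e by simp
              qed
              finally show "dist (f (sq n) z) (f ts z) < e" .
            qed
          qed
        qed
      qed
      thus False using zs by simp
    qed
  qed
  have "U = {} \<or> U = I" using conI opn clo unfolding connected_clopen by blast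
  moreover have "0 \<notin> U" using base ce unfolding U_def by force
  ultimately have "U = {}" using I(2) by blast
  thus ?thesis unfolding U_def using ce by (metis (mono_tags, lifting) empty_iff mem_Collect_eq not_less)
qed

lemma model_alg:
  fixes X Y k q u w \<kappa> \<beta> \<sigma> a2 a1 a0 b1 b0 :: real
  assumes X: "X = \<sigma> + k" and Y: "Y = u + q" and uq: "u*q = \<beta>*k"
    and pos: "\<sigma> > 0" "k > 0" "q > 0" "u > 0" "\<kappa> > 0" "\<beta> > 0" "w > 0" "w < u"
    and a2: "a2 = X + Y + \<kappa>" and a1: "a1 = X*Y + \<kappa>*X + \<kappa>*Y - k*q"
    and a0: "a0 = \<kappa>*X*Y - \<kappa>*k*q - q*(\<kappa>*w)"
    and b1: "b1 = \<beta>*k - \<kappa>*w" and b0: "b0 = \<beta>*k*\<kappa> + \<beta>*(\<kappa>*w) - (\<kappa>*w)*X"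
    and H1: "a0 + b0 > 0" and C: "a0^2 - b0^2 \<ge> 0"
  shows "a1^2 - 2*a2*a0 - b1^2 \<ge> 0"
proof -
  define D where "D = X*Y - k*q"
  have "(a0 - b0) * (a0 + b0) \<ge> 0" using C by (simp add: algebra_simps power2_eq_square)
  hence ab: "a0 - b0 \<ge> 0" using H1 by (simp add: zero_le_mult_iff)
  have ab2: "a0 - b0 = \<kappa> * ((D - u*q) - w*(q + \<beta> - X))"
    unfolding a0 b0 D_def using uq by (simp add: algebra_simps)
  have ab3: "(D - u*q) - w*(q + \<beta> - X) \<ge> 0"
    using ab ab2 pos by (simp add: zero_le_mult_iff)
  have Dexp: "D = \<sigma>*u + \<sigma>*q + k*u" unfolding D_def X Y by (simp add: algebra_simps)
  have Dge: "D \<ge> u*q"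
  proof (rule ccontr)
    assume Dlt: "\<not> D \<ge> u*q"
    show False
    proof (cases "q + \<beta> - X \<ge> 0")
      case True
      hence "w*(q + \<beta> - X) \<ge> 0" using pos by simp
      thus False using ab3 Dlt by linarith
    next
      case False
      hence "w*(q + \<beta> - X) \<ge> u*(q + \<beta> - X)" using pos
        by (intro mult_right_mono_neg) auto
      hence "D - u*q \<ge> u*(q + \<beta> - X)" using ab3 by linarith
      hence h: "\<sigma>*u + \<sigma>*q + k*u - u*q \<ge> u*q + u*\<beta> - u*\<sigma> - u*k"
        unfolding Dexp X by (simp add: algebra_simps)
      have "u*\<beta> > 0" "\<sigma>*q > 0" using pos by auto
      thus False using h Dlt Dexp by (simp add: algebra_simps)
    qed
  qed
  have B: "a1^2 - 2*a2*a0 - b1^2 = (D - u*q)*(D + u*q) + \<kappa>^2*(X^2 + (Y^2 - w^2) + 2*k*q)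
        + 2*\<kappa>*q*w*(X + Y + u) + 2*\<kappa>^2*q*w"
    unfolding a1 a2 a0 b1 D_def uq[symmetric] by (simp add: algebra_simps power2_eq_square)
  have "u*q > 0" using pos by simp
  hence t1: "(D - u*q)*(D + u*q) \<ge> 0" using Dge by (intro mult_nonneg_nonneg) linarith+
  have "Y^2 - w^2 \<ge> 0" using pos Y by (simp add: power_mono)
  hence t2: "\<kappa>^2*(X^2 + (Y^2 - w^2) + 2*k*q) \<ge> 0" using pos by simp
  have t3: "2*\<kappa>*q*w*(X + Y + u) \<ge> 0" using pos X Y by simp
  have t4: "2*\<kappa>^2*q*w \<ge> 0" using pos by simp
  show ?thesis unfolding B using t1 t2 t3 t4 by linarith
qed

lemma imag_root:
  fixes \<omega> \<tau> :: real
  assumes ce: "char_eq a2 a1 a0 b1 b0 \<tau> (\<i> * of_real \<omega>)"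
  shows "(\<omega>^2)^3 + (a2^2 - 2*a1)*(\<omega>^2)^2 + (a1^2 - 2*a2*a0 - b1^2)*\<omega>^2 + (a0^2 - b0^2) = 0"
    and "(b0^2 + b1^2*\<omega>^2) * cos (\<omega>*\<tau>) = b0*(a2*\<omega>^2 - a0) + b1*\<omega>*(\<omega>^3 - a1*\<omega>)"
proof -
  define cc where "cc = cos (\<omega>*\<tau>)"
  define ss where "ss = sin (\<omega>*\<tau>)"
  have e: "exp (- (\<i> * of_real \<omega>) * of_real \<tau>) = Complex cc (- ss)"
  proof -
    have "- (\<i> * of_real \<omega>) * of_real \<tau> = \<i> * of_real (-(\<omega>*\<tau>))" by simp
    hence "exp (- (\<i> * of_real \<omega>) * of_real \<tau>) = cis (-(\<omega>*\<tau>))" by (simp add: cis_conv_exp mult.assoc)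
    thus ?thesis unfolding cc_def ss_def by (simp add: cis.code)
  qed
  have eq: "(\<i> * of_real \<omega>)^3 + of_real a2 * (\<i> * of_real \<omega>)^2 + of_real a1 * (\<i> * of_real \<omega>) + of_real a0
       + (of_real b1 * (\<i> * of_real \<omega>) + of_real b0) * Complex cc (- ss) = 0"
    using ce e unfolding char_eq_def by simp
  have re: "a0 - a2*\<omega>^2 + b0*cc + b1*\<omega>* ss = 0"
    using arg_cong[OF eq, of Re] by (simp add: power2_eq_square power3_eq_cube algebra_simps)
  have im: "a1*\<omega> - \<omega>^3 + b1*\<omega>*cc - b0* ss = 0"
    using arg_cong[OF eq, of Im] by (simp add: power2_eq_square power3_eq_cube algebra_simps)
  have cs: "cc^2 + ss^2 = 1" unfolding cc_def ss_def by simp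
  have X: "b0*cc + b1*\<omega>* ss = a2*\<omega>^2 - a0" using re by linarith
  have Y: "b1*\<omega>*cc - b0* ss = \<omega>^3 - a1*\<omega>" using im by linarith
  have "(b0*cc + b1*\<omega>* ss)^2 + (b1*\<omega>*cc - b0* ss)^2 = (b0^2 + b1^2*\<omega>^2)*(cc^2+ss^2)"
    by (simp add: algebra_simps power2_eq_square)
  hence "(a2*\<omega>^2 - a0)^2 + (\<omega>^3 - a1*\<omega>)^2 = b0^2 + b1^2*\<omega>^2" using X Y cs by simp
  thus "(\<omega>^2)^3 + (a2^2 - 2*a1)*(\<omega>^2)^2 + (a1^2 - 2*a2*a0 - b1^2)*\<omega>^2 + (a0^2 - b0^2) = 0"
    by (simp add: algebra_simps power2_eq_square power3_eq_cube)
  have "b0*(b0*cc + b1*\<omega>* ss) + b1*\<omega>*(b1*\<omega>*cc - b0* ss) = (b0^2 + b1^2*\<omega>^2)*cc"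
    by (simp add: algebra_simps power2_eq_square)
  thus "(b0^2 + b1^2*\<omega>^2) * cos (\<omega>*\<tau>) = b0*(a2*\<omega>^2 - a0) + b1*\<omega>*(\<omega>^3 - a1*\<omega>)"
    using X Y unfolding cc_def by simp
qed

lemma aux_uq: "(Dv::real) \<noteq> 0 \<Longrightarrow> I2 \<noteq> 0 \<Longrightarrow> Tm \<noteq> 0 \<Longrightarrow>
   b*T2*V2/(Dv*I2) * (a*I2/Tm) = b*V2/Dv * (a*T2/Tm)" by (simp add: field_simps)
lemma aux_pm: "(Dv::real) \<noteq> 0 \<Longrightarrow> I2 \<noteq> 0 \<Longrightarrow> V2 \<noteq> 0 \<Longrightarrow>
   p * (b*T2/Dv^2) = (p*I2/V2) * (b*T2*V2/(Dv*I2)/Dv)" by (simp add: field_simps power2_eq_square)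

theorem theorem2:
  fixes s d a Tmax b \<alpha> \<mu> p c T2 I2 V2 :: real
    and \<beta> k q m \<kappa> \<rho> A11 A22 a2 a1 a0 b1 b0 A B C \<Delta> :: real
  assumes pos: "s > 0" "d > 0" "a > 0" "Tmax > 0" "b > 0" "\<alpha> > 0" "\<mu> > 0" "p > 0" "c > 0"
    and E2pos: "T2 > 0" "I2 > 0" "V2 > 0"
    and eqT: "s - d*T2 + a*T2*(1 - (T2 + I2)/Tmax) - b*T2*V2/(1 + \<alpha>*V2) = 0"
    and eqI: "b*T2*V2/(1 + \<alpha>*V2) + a*I2*(1 - (T2 + I2)/Tmax) - \<mu>*I2 = 0"
    and eqV: "p*I2 - c*V2 = 0"
    and \<beta>_def: "\<beta> = b*V2/(1 + \<alpha>*V2)"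
    and k_def: "k = a*T2/Tmax"
    and q_def: "q = a*I2/Tmax"
    and m_def: "m = b*T2/(1 + \<alpha>*V2)^2"
    and \<kappa>_def: "\<kappa> = p*I2/V2"
    and \<rho>_def: "\<rho> = d - a + a*(T2 + I2)/Tmax"
    and A11_def: "A11 = \<rho> + k + \<beta>"
    and A22_def: "A22 = b*T2*V2/((1 + \<alpha>*V2)*I2) + q"
    and a2_def: "a2 = A11 + A22 + \<kappa>"
    and a1_def: "a1 = A11*A22 + \<kappa>*A11 + \<kappa>*A22 - k*q"
    and a0_def: "a0 = \<kappa>*A11*A22 - \<kappa>*k*q - p*q*m"
    and b1_def: "b1 = \<beta>*k - p*m"
    and b0_def: "b0 = \<beta>*k*\<kappa> + \<beta>*p*m - p*m*A11"
    and A_def: "A = a2^2 - 2*a1"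
    and B_def: "B = a1^2 - 2*a2*a0 - b1^2"
    and C_def: "C = a0^2 - b0^2"
    and \<Delta>_def: "\<Delta> = A^2 - 3*B"
    and H1: "a0 + b0 > 0"
    and H2: "a2*(a1 + b1) - (a0 + b0) > 0"
  shows "(C \<ge> 0 \<and> \<Delta> < 0 \<longrightarrow>
            (\<forall>\<tau>\<ge>0. \<forall>lam. char_eq a2 a1 a0 b1 b0 \<tau> lam \<longrightarrow> Re lam < 0))
       \<and> ((C < 0 \<or> (C \<ge> 0 \<and> \<Delta> \<ge> 0 \<and> (- A + sqrt \<Delta>)/3 > 0
                 \<and> ((- A + sqrt \<Delta>)/3)^3 + A*((- A + sqrt \<Delta>)/3)^2 + B*((- A + sqrt \<Delta>)/3) + C \<le> 0))
          \<longrightarrow> (\<forall>\<tau>. 0 \<le> \<tau> \<and> \<tau> < tau0 a2 a1 a0 b1 b0 A B C \<longrightarrow>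
                 (\<forall>lam. char_eq a2 a1 a0 b1 b0 \<tau> lam \<longrightarrow> Re lam < 0)))"
proof -
  note P = pos E2pos
  have aV1: "1 + \<alpha>*V2 > 1" using P by simp
  have aV0: "1 + \<alpha>*V2 \<noteq> 0" using aV1 by linarith
  have aVp: "1 + \<alpha>*V2 > 0" using aV1 by linarith
  have Tm0: "Tmax \<noteq> 0" using P by simp
  have T20: "T2 \<noteq> 0" "I2 \<noteq> 0" "V2 \<noteq> 0" using P by auto
  define \<sigma> where "\<sigma> = s/T2"
  define u where "u = b*T2*V2/((1+\<alpha>*V2)*I2)"
  define w where "w = u/(1+\<alpha>*V2)"
  have \<beta>pos: "\<beta> > 0" unfolding \<beta>_def by (intro divide_pos_pos mult_pos_pos) (use P aVp in auto)
  have kpos: "k > 0" unfolding k_def using P by simp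
  have qpos: "q > 0" unfolding q_def using P by simp
  have \<kappa>pos: "\<kappa> > 0" unfolding \<kappa>_def using P by simp
  have \<sigma>pos: "\<sigma> > 0" unfolding \<sigma>_def using P by simp
  have upos: "u > 0" unfolding u_def by (intro divide_pos_pos mult_pos_pos) (use P aVp in auto)
  have wpos: "w > 0" unfolding w_def by (intro divide_pos_pos) (use upos aVp in auto)
  have wu: "w < u"
  proof -
    have "w * (1 + \<alpha>*V2) = u" unfolding w_def using aV0 by simp
    hence "u = w + w*(\<alpha>*V2)" by (simp add: algebra_simps)
    moreover have "w*(\<alpha>*V2) > 0" using wpos P by simp
    ultimately show ?thesis by linarith
  qed
  define Xr where "Xr = (T2 + I2)/Tmax"
  have e1: "b*T2*V2/(1+\<alpha>*V2) = T2*\<beta>" unfolding \<beta>_def by simp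
  have "s - d*T2 + a*T2*(1 - Xr) - T2*\<beta> = 0" using eqT e1 unfolding Xr_def by simp
  hence "s = d*T2 - a*T2*(1 - Xr) + T2*\<beta>" by linarith
  hence sT: "s = T2*(d - a + a*Xr + \<beta>)" by (simp add: algebra_simps)
  have \<rho>\<sigma>: "\<rho> = \<sigma> - \<beta>" unfolding \<rho>_def \<sigma>_def sT using T20 by (simp add: Xr_def)
  have X: "A11 = \<sigma> + k" unfolding A11_def \<rho>\<sigma> by simp
  have Y: "A22 = u + q" unfolding A22_def u_def by simp
  have uq: "u*q = \<beta>*k" unfolding u_def q_def \<beta>_def k_def using aux_uq[OF aV0 T20(2) Tm0] .
  have pm: "p*m = \<kappa>*w" unfolding m_def \<kappa>_def w_def u_def using aux_pm[OF aV0 T20(2) T20(3)] .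
  have a0': "a0 = \<kappa>*A11*A22 - \<kappa>*k*q - q*(\<kappa>*w)" unfolding a0_def pm[symmetric] by (simp add: algebra_simps)
  have b1': "b1 = \<beta>*k - \<kappa>*w" unfolding b1_def pm by simp
  have "b0 = \<beta>*k*\<kappa> + \<beta>*(p*m) - (p*m)*A11" unfolding b0_def by (simp add: mult.assoc)
  hence b0': "b0 = \<beta>*k*\<kappa> + \<beta>*(\<kappa>*w) - (\<kappa>*w)*A11" unfolding pm .
  have A11pos: "A11 > 0" using X \<sigma>pos kpos by simp
  have A22pos: "A22 > 0" using Y upos qpos by simp
  have a2pos: "a2 > 0" unfolding a2_def using A11pos A22pos \<kappa>pos by simp
  have Apos: "A > 0"
  proof -
    have "A = A11^2 + A22^2 + \<kappa>^2 + 2*k*q" unfolding A_def a2_def a1_def by (simp add: algebra_simps power2_eq_square)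
    moreover have "A11^2 > 0" using A11pos by simp
    moreover have "A22^2 \<ge> 0" "\<kappa>^2 \<ge> 0" "k*q > 0" using kpos qpos by auto
    ultimately show ?thesis by linarith
  qed
  have CB: "B \<ge> 0" if "C \<ge> 0"
    unfolding B_def
    by (rule model_alg[OF X Y uq \<sigma>pos kpos qpos upos \<kappa>pos \<beta>pos wpos wu a2_def a1_def a0' b1' b0' H1])
       (use that C_def in simp)
  have base: "\<forall>z. char_eq a2 a1 a0 b1 b0 0 z \<longrightarrow> Re z < 0"
  proof (intro allI impI)
    fix z assume ce: "char_eq a2 a1 a0 b1 b0 0 z"
    obtain x y where z: "z = Complex x y" by (metis complex.exhaust)
    have eq: "z^3 + of_real a2 * z^2 + of_real (a1 + b1) * z + of_real (a0 + b0) = 0"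
      using ce unfolding char_eq_def by (simp add: algebra_simps)
    have re: "x^3 - 3*x*y^2 + a2*(x^2 - y^2) + (a1 + b1)*x + (a0 + b0) = 0"
      using arg_cong[OF eq, of Re] unfolding z by (simp add: power2_eq_square power3_eq_cube algebra_simps)
    have im: "3*x^2*y - y^3 + 2*a2*x*y + (a1 + b1)*y = 0"
      using arg_cong[OF eq, of Im] unfolding z by (simp add: power2_eq_square power3_eq_cube algebra_simps)
    have "\<not> x \<ge> 0"
    proof
      assume "x \<ge> 0"
      show False
        by (rule RH_cubic[OF a2pos H1 _ \<open>x \<ge> 0\<close> re im]) (use H2 in simp)
    qed
    thus "Re z < 0" unfolding z by simp
  qed
  have imag: "\<exists>\<omega>. \<omega> \<noteq> 0 \<and> (\<omega>^2)^3 + A*(\<omega>^2)^2 + B*\<omega>^2 + C = 0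
      \<and> (b0^2 + b1^2*\<omega>^2) * cos (\<omega>*\<tau>) = b0*(a2*\<omega>^2 - a0) + b1*\<omega>*(\<omega>^3 - a1*\<omega>)"
    if ce: "char_eq a2 a1 a0 b1 b0 \<tau> z" and rz: "Re z = 0" for \<tau> z
  proof -
    have zi: "z = \<i> * of_real (Im z)" using rz by (simp add: complex_eq_iff)
    have ce': "char_eq a2 a1 a0 b1 b0 \<tau> (\<i> * of_real (Im z))" using ce zi by simp
    have "Im z \<noteq> 0"
    proof
      assume "Im z = 0"
      hence "z = 0" using zi by simp
      hence "of_real (a0 + b0) = (0::complex)" using ce unfolding char_eq_def by simp
      hence "a0 + b0 = 0" by (simp only: of_real_eq_0_iff)
      thus False using H1 by simp
    qed
    thus ?thesis using imag_root[OF ce'] unfolding A_def B_def C_def by blast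
  qed
  show ?thesis
  proof (intro conjI impI)
    assume "C \<ge> 0 \<and> \<Delta> < 0"
    hence B0: "B \<ge> 0" using CB by simp
    have C0: "C \<ge> 0" using \<open>C \<ge> 0 \<and> \<Delta> < 0\<close> by simp
    have "\<forall>\<tau>\<in>{0..}. \<forall>z. char_eq a2 a1 a0 b1 b0 \<tau> z \<longrightarrow> Re z < 0"
    proof (rule stab_interval)
      show "\<forall>\<tau>\<in>{0::real..}. \<forall>z. char_eq a2 a1 a0 b1 b0 \<tau> z \<longrightarrow> Re z \<noteq> 0"
      proof (intro ballI allI impI notI)
        fix \<tau> :: real and z assume "char_eq a2 a1 a0 b1 b0 \<tau> z" "Re z = 0"
        then obtain \<omega> where om: "\<omega> \<noteq> 0" "(\<omega>^2)^3 + A*(\<omega>^2)^2 + B*\<omega>^2 + C = 0"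
          using imag by blast
        have t: "\<omega>^2 > 0" using om by simp
        have "(\<omega>^2)^3 + A*(\<omega>^2)^2 + B*\<omega>^2 + C > 0"
          using t Apos B0 C0 by (simp add: add_pos_nonneg)
        thus False using om by simp
      qed
    qed (use base in auto)
    thus "\<forall>\<tau>\<ge>0. \<forall>lam. char_eq a2 a1 a0 b1 b0 \<tau> lam \<longrightarrow> Re lam < 0" by auto
  next
    assume hyp: "C < 0 \<or> (C \<ge> 0 \<and> \<Delta> \<ge> 0 \<and> (- A + sqrt \<Delta>)/3 > 0
                 \<and> ((- A + sqrt \<Delta>)/3)^3 + A*((- A + sqrt \<Delta>)/3)^2 + B*((- A + sqrt \<Delta>)/3) + C \<le> 0)"
    have Cneg: "C < 0"
    proof (rule ccontr)
      assume "\<not> C < 0"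
      with hyp have h: "C \<ge> 0" "\<Delta> \<ge> 0" "(- A + sqrt \<Delta>)/3 > 0" by auto
      have "B \<ge> 0" using CB h by simp
      hence "\<Delta> \<le> A^2" unfolding \<Delta>_def by simp
      hence "sqrt \<Delta> \<le> sqrt (A^2)" by (rule real_sqrt_le_mono)
      hence "sqrt \<Delta> \<le> A" using Apos by simp
      thus False using h by simp
    qed
    define h where "h z = z^3 + A*z^2 + B*z + C" for z :: real
    define T where "T = 1 + \<bar>A\<bar> + \<bar>B\<bar> + \<bar>C\<bar>"
    have hT: "h T \<ge> 0"
    proof -
      have T1: "T \<ge> 1" unfolding T_def by simp
      have "\<bar>B\<bar>*T \<le> \<bar>B\<bar>*T^2" using T1 by (intro mult_left_mono) (auto simp: power2_eq_square)
      moreover have "\<bar>C\<bar> \<le> \<bar>C\<bar>*T^2"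
      proof -
        have "1 \<le> T^2" using T1 one_le_power by blast
        thus ?thesis using mult_left_mono[of 1 "T^2" "\<bar>C\<bar>"] by simp
      qed
      moreover have "(\<bar>B\<bar> + \<bar>C\<bar>) * T^2 \<le> T * T^2" unfolding T_def by (intro mult_right_mono) auto
      moreover have "A*T^2 \<ge> 0" using Apos by simp
      moreover have "B*T \<ge> - (\<bar>B\<bar>*T)"
      proof -
        have "(-\<bar>B\<bar>)*T \<le> B*T" by (rule mult_right_mono) (use T1 in auto)
        thus ?thesis by simp
      qed
      ultimately show ?thesis unfolding h_def by (simp add: power3_eq_cube power2_eq_square algebra_simps)
    qed
    have "\<exists>x\<ge>0. x \<le> T \<and> h x = 0"
      by (rule IVT') (use Cneg hT in \<open>auto simp: h_def T_def intro!: continuous_intros\<close>)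
    then obtain z0 where z0: "z0 \<ge> 0" "h z0 = 0" by blast
    have z0pos: "z0 > 0" using z0 Cneg unfolding h_def by (cases "z0 = 0") auto
    have uniq: "z' = z0" if "z' > 0" "h z' = 0" for z'
    proof (rule ccontr)
      assume ne: "z' \<noteq> z0"
      have "(z' - z0)*(z'*z0*(z' + z0) + A*z'*z0 - C) = z0*h z' - z'*h z0"
        unfolding h_def by (simp add: algebra_simps power2_eq_square power3_eq_cube)
      hence "z'*z0*(z' + z0) + A*z'*z0 - C = 0" using that z0 ne by simp
      moreover have "z'*z0*(z' + z0) > 0" "A*z'*z0 > 0" using that z0pos Apos by simp_all
      ultimately show False using Cneg by linarith
    qed
    have setz: "{z::real. z > 0 \<and> z^3 + A*z^2 + B*z + C = 0} = {z0}"
    proof (intro set_eqI iffI)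
      fix x assume "x \<in> {z::real. z > 0 \<and> z^3 + A*z^2 + B*z + C = 0}"
      hence "x > 0" "h x = 0" unfolding h_def by auto
      from uniq[OF this] show "x \<in> {z0}" by simp
    next
      fix x assume "x \<in> {z0}"
      thus "x \<in> {z::real. z > 0 \<and> z^3 + A*z^2 + B*z + C = 0}" using z0pos z0(2) unfolding h_def by simp
    qed
    have spr: "smallest_pos_root A B C = z0" unfolding smallest_pos_root_def setz by simp
    define w0 where "w0 = sqrt z0"
    have w0pos: "w0 > 0" unfolding w0_def using z0pos by simp
    have w0sq: "w0^2 = z0" unfolding w0_def using z0pos by simp
    define F where "F = (b0 * (a2 * w0^2 - a0) + b1 * w0 * (w0^3 - a1 * w0)) / (b0^2 + b1^2 * w0^2)"
    have tau0eq: "tau0 a2 a1 a0 b1 b0 A B C = (1 / w0) * arccos F"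
      unfolding tau0_def spr F_def w0_def Let_def by simp
    have noim: "\<forall>\<tau>\<in>{0..<tau0 a2 a1 a0 b1 b0 A B C}. \<forall>z. char_eq a2 a1 a0 b1 b0 \<tau> z \<longrightarrow> Re z \<noteq> 0"
    proof (intro ballI allI impI notI)
      fix \<tau> :: real and z
      assume \<tau>: "\<tau> \<in> {0..<tau0 a2 a1 a0 b1 b0 A B C}" and ce: "char_eq a2 a1 a0 b1 b0 \<tau> z" and rz: "Re z = 0"
      then obtain \<omega> where om: "\<omega> \<noteq> 0" "(\<omega>^2)^3 + A*(\<omega>^2)^2 + B*\<omega>^2 + C = 0"
          "(b0^2 + b1^2*\<omega>^2) * cos (\<omega>*\<tau>) = b0*(a2*\<omega>^2 - a0) + b1*\<omega>*(\<omega>^3 - a1*\<omega>)"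
        using imag by blast
      have "\<omega>^2 > 0" using om(1) by simp
      moreover have "h (\<omega>^2) = 0" using om(2) unfolding h_def by simp
      ultimately have "\<omega>^2 = z0" by (rule uniq)
      hence ow: "\<omega>^2 = w0^2" using w0sq by simp
      have absw: "\<bar>\<omega>\<bar> = w0" using ow w0pos by (metis real_sqrt_abs abs_of_pos real_sqrt_abs)
      have den: "b0^2 + b1^2*w0^2 \<noteq> 0"
      proof
        assume "b0^2 + b1^2*w0^2 = 0"
        hence "b0 = 0" "b1 = 0" using w0pos by (auto simp: add_nonneg_eq_0_iff)
        thus False using Cneg unfolding C_def by simp
      qed
      have N: "b0*(a2*\<omega>^2 - a0) + b1*\<omega>*(\<omega>^3 - a1*\<omega>) = b0*(a2*w0^2 - a0) + b1*w0*(w0^3 - a1*w0)"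
      proof -
        have "b0*(a2*\<omega>^2 - a0) + b1*\<omega>*(\<omega>^3 - a1*\<omega>) = b0*(a2*\<omega>^2 - a0) + b1*((\<omega>^2)^2 - a1*\<omega>^2)"
          by (simp add: algebra_simps power2_eq_square power3_eq_cube)
        also have "\<dots> = b0*(a2*w0^2 - a0) + b1*((w0^2)^2 - a1*w0^2)" using ow by simp
        also have "\<dots> = b0*(a2*w0^2 - a0) + b1*w0*(w0^3 - a1*w0)"
          by (simp add: algebra_simps power2_eq_square power3_eq_cube)
        finally show ?thesis .
      qed
      have cosw: "cos (\<omega>*\<tau>) = cos (w0*\<tau>)"
      proof (cases "\<omega> \<ge> 0")
        case True thus ?thesis using absw by simp
      next
        case False
        hence "w0 = - \<omega>" using absw by simp
        thus ?thesis by simp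
      qed
      have "(b0^2 + b1^2*w0^2) * cos (w0*\<tau>) = (b0^2 + b1^2*\<omega>^2) * cos (\<omega>*\<tau>)"
        using ow cosw by simp
      also have "\<dots> = b0*(a2*\<omega>^2 - a0) + b1*\<omega>*(\<omega>^3 - a1*\<omega>)" by (rule om(3))
      also have "\<dots> = b0*(a2*w0^2 - a0) + b1*w0*(w0^3 - a1*w0)" by (rule N)
      finally have e3: "(b0^2 + b1^2*w0^2) * cos (w0*\<tau>) = b0*(a2*w0^2 - a0) + b1*w0*(w0^3 - a1*w0)" .
      have cF: "cos (w0*\<tau>) = F"
        unfolding F_def using e3 den by (metis nonzero_mult_div_cancel_left)
      have Fr: "-1 \<le> F" "F \<le> 1" using cF[symmetric] by simp_all
      have "\<tau> < (1 / w0) * arccos F" using \<tau> tau0eq by simp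
      hence lt: "w0*\<tau> < arccos F" using w0pos by (simp add: field_simps)
      have ge: "0 \<le> w0*\<tau>" using \<tau> w0pos by simp
      have "cos (arccos F) < cos (w0*\<tau>)"
        by (rule cos_monotone_0_pi[OF ge lt arccos_ubound[OF Fr]])
      thus False using cF Fr by simp
    qed
    have "\<forall>\<tau>\<in>{0..<tau0 a2 a1 a0 b1 b0 A B C}. \<forall>z. char_eq a2 a1 a0 b1 b0 \<tau> z \<longrightarrow> Re z < 0"
    proof (cases "tau0 a2 a1 a0 b1 b0 A B C > 0")
      case True
      show ?thesis
        by (rule stab_interval) (use True noim base in \<open>auto simp: is_interval_1\<close>)
    next
      case False thus ?thesis by simp
    qed
    thus "\<forall>\<tau>. 0 \<le> \<tau> \<and> \<tau> < tau0 a2 a1 a0 b1 b0 A B C \<longrightarrow>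
                 (\<forall>lam. char_eq a2 a1 a0 b1 b0 \<tau> lam \<longrightarrow> Re lam < 0)" by auto
  qed
qed

end
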